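(* Let $X$ be a real or complex $m\times n$ matrix and $\tilde X=J_m^*XJ_n$ (an $(m+1)\times(n+1)$ matrix all of whose row and column sums are zero). Let $k_m,k_n$ be invertible square matrices with $K_m=k_mk_m^*$ and $K_n=k_nk_n^*$. Then \[\tilde X^+=J_n^*(k_n^{-1})^*(k_m^*Xk_n)^+k_m^{-1}J_m.\]
   Context: $A^*$ denotes conjugate transpose and $A^+$ the Moore–Penrose inverse (the unique $B$ with $ABA=A$, $BAB=B$, $(AB)^*=AB$, $(BA)^*=BA$). For each $p\ge1$, $\mathbf 1$ is the all-ones column vector, $J_p:=[I_p\mid -\mathbf 1]$ is the $p\times(p+1)$ matrix obtained by appending a column of $-1$'s to $I_p$, and $K_p:=J_pJ_p^*=I_p+\mathbf 1\mathbf 1^*$ (symmetric positive definite). *)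

theory Defs
  imports "Jordan_Normal_Form.Schur_Decomposition"
begin

definition mp_inverse :: "'a :: conjugatable_field mat \<Rightarrow> 'a mat" where
  "mp_inverse A = (THE B. B \<in> carrier_mat (dim_col A) (dim_row A) \<and>
      A * B * A = A \<and> B * A * B = B \<and>
      mat_adjoint (A * B) = A * B \<and> mat_adjoint (B * A) = B * A)"

definition inv_mat :: "'a :: field mat \<Rightarrow> 'a mat" where
  "inv_mat A = (THE B. B \<in> carrier_mat (dim_row A) (dim_row A) \<and>
      A * B = 1\<^sub>m (dim_row A) \<and> B * A = 1\<^sub>m (dim_row A))"

definition J_mat :: "nat \<Rightarrow> 'a :: ring_1 mat" where
  "J_mat p = mat p (p + 1) (\<lambda>(i, j). if j = p then - 1 else if i = j then 1 else 0)"

definition K_mat :: "nat \<Rightarrow> 'a :: conjugatable_field mat" where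
  "K_mat p = J_mat p * mat_adjoint (J_mat p)"

end

theory Submission
  imports Defs
begin
lemma adj_dims[simp]: "dim_row (mat_adjoint A) = dim_col A" "dim_col (mat_adjoint A) = dim_row A"
  unfolding mat_adjoint_def by auto
lemma adj_index[simp]: "i < dim_col A \<Longrightarrow> j < dim_row A \<Longrightarrow> mat_adjoint A $$ (i,j) = conjugate (A $$ (j,i))"
  unfolding mat_adjoint_def mat_of_rows_def by auto
lemma adj_carrier[simp]: "A \<in> carrier_mat r c \<Longrightarrow> mat_adjoint A \<in> carrier_mat c r"
  unfolding carrier_mat_def by simp
lemma adj_adj[simp]: "mat_adjoint (mat_adjoint A) = A"
  by (rule eq_matI, simp_all)

lemma conj_one[simp]: "conjugate (1::'a::conjugatable_field) = 1"
proof -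
  have "conjugate (1::'a) = conjugate 1 * conjugate 1" using conjugate_dist_mul[of "1::'a" 1] by simp
  moreover have "conjugate (1::'a) \<noteq> 0" by simp
  ultimately show ?thesis by (metis mult_cancel_left1)
qed

lemma adj_one[simp]: "mat_adjoint (1\<^sub>m n :: 'a::conjugatable_field mat) = 1\<^sub>m n"
  by (rule eq_matI, simp_all)

lemma adj_mult: fixes A :: "'a::conjugatable_field mat"
  assumes "dim_col A = dim_row B"
  shows "mat_adjoint (A * B) = mat_adjoint B * mat_adjoint A"
proof (rule eq_matI)
  fix i j assume i: "i < dim_row (mat_adjoint B * mat_adjoint A)" and j: "j < dim_col (mat_adjoint B * mat_adjoint A)"
  have "mat_adjoint (A * B) $$ (i, j) = conjugate (row A j \<bullet> col B i)" using i j by simp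
  also have "\<dots> = (\<Sum>k\<in>{0..<dim_row B}. conjugate (A $$ (j,k) * B $$ (k,i)))"
    unfolding scalar_prod_def using i j assms
    by (simp add: sum_conjugate)
  also have "\<dots> = (\<Sum>k\<in>{0..<dim_row B}. conjugate (B $$ (k,i)) * conjugate (A $$ (j,k)))"
    by (rule sum.cong, simp, simp add: conjugate_dist_mul mult.commute)
  also have "\<dots> = (mat_adjoint B * mat_adjoint A) $$ (i, j)"
    using i j assms by (simp add: scalar_prod_def)
  finally show "mat_adjoint (A * B) $$ (i, j) = (mat_adjoint B * mat_adjoint A) $$ (i, j)" .
qed simp_all

lemma adj_zero_imp: fixes E :: "'a::conjugatable_ordered_field mat"
  assumes "mat_adjoint E * E = 0\<^sub>m (dim_col E) (dim_col E)"
  shows "E = 0\<^sub>m (dim_row E) (dim_col E)"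
proof (rule eq_matI)
  fix i j assume i: "i < dim_row (0\<^sub>m (dim_row E) (dim_col E) :: 'a mat)" and j: "j < dim_col (0\<^sub>m (dim_row E) (dim_col E) :: 'a mat)"
  have "(mat_adjoint E * E) $$ (j,j) = 0" using assms j by simp
  hence "(\<Sum>k\<in>{0..<dim_row E}. conjugate (E $$ (k,j)) * E $$ (k,j)) = 0" using j
    by (simp add: scalar_prod_def)
  hence "col E j \<bullet>c col E j = 0" using j
    unfolding scalar_prod_def by (simp add: mult.commute)
  hence "col E j = 0\<^sub>v (dim_row E)" using conjugate_square_eq_0_vec[of "col E j" "dim_row E"] by simp
  hence "col E j $ i = 0" using i by simp
  thus "E $$ (i, j) = 0\<^sub>m (dim_row E) (dim_col E) $$ (i, j)" using i j by simp
qed simp_all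

lemma massoc: "dim_col A = dim_row B \<Longrightarrow> dim_col B = dim_row C \<Longrightarrow> A * B * C = A * (B * C)"
proof -
  assume h: "dim_col A = dim_row B" "dim_col B = dim_row C"
  have "A \<in> carrier_mat (dim_row A) (dim_col A)" by (rule carrier_matI[OF refl refl])
  moreover have "B \<in> carrier_mat (dim_col A) (dim_col B)" by (rule carrier_matI[OF h(1)[symmetric] refl])
  moreover have "C \<in> carrier_mat (dim_col B) (dim_col C)" by (rule carrier_matI[OF h(2)[symmetric] refl])
  ultimately show ?thesis by (rule assoc_mult_mat)
qed

lemma minus_eq_0: fixes X :: "'a::ab_group_add mat"
  assumes X: "X \<in> carrier_mat r k" and Y: "Y \<in> carrier_mat r k" and e: "X - Y = 0\<^sub>m r k"
  shows "X = Y"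
proof -
  have "X $$ (i,j) = Y $$ (i,j)" if ij: "i < r" "j < k" for i j
  proof -
    have "(X - Y) $$ (i,j) = 0" using ij by (simp add: e)
    hence "X $$ (i,j) - Y $$ (i,j) = 0" using X Y ij by simp
    thus ?thesis by simp
  qed
  thus ?thesis using X Y by (intro eq_matI) simp_all
qed

lemma cancel_adj: fixes A :: "'a::conjugatable_ordered_field mat"
  assumes A: "A \<in> carrier_mat r c" and U: "U \<in> carrier_mat c k" and V: "V \<in> carrier_mat c k"
  and eq: "mat_adjoint A * (A * U) = mat_adjoint A * (A * V)"
  shows "A * U = A * V"
proof -
  define D where "D = U - V"
  have D: "D \<in> carrier_mat c k" unfolding D_def by (rule minus_carrier_mat[OF V])
  define E where "E = A * D"
  have E: "E = A * U - A * V" unfolding E_def D_def by (rule mult_minus_distrib_mat[OF A U V])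
  have Ec: "E \<in> carrier_mat r k" unfolding E_def using A D by simp
  have AU: "A * U \<in> carrier_mat r k" "A * V \<in> carrier_mat r k" using A U V by simp_all
  have "mat_adjoint A * E = mat_adjoint A * (A * U) - mat_adjoint A * (A * V)"
    unfolding E by (rule mult_minus_distrib_mat[OF adj_carrier[OF A] AU])
  also have "\<dots> = 0\<^sub>m c k" unfolding eq by (rule eq_matI, use A V in simp_all)
  finally have 1: "mat_adjoint A * E = 0\<^sub>m c k" .
  have "mat_adjoint E * E = mat_adjoint D * mat_adjoint A * (A * D)"
    unfolding E_def using A D by (simp add: adj_mult)
  also have "\<dots> = mat_adjoint D * (mat_adjoint A * E)" unfolding E_def using A D by (simp add: massoc)
  also have "\<dots> = 0\<^sub>m k k" unfolding 1 using D by simp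
  finally have "mat_adjoint E * E = 0\<^sub>m (dim_col E) (dim_col E)" using Ec by simp
  hence "E = 0\<^sub>m r k" using adj_zero_imp[of E] Ec by simp
  thus ?thesis using minus_eq_0[OF AU] E by simp
qed

definition is_mp :: "'a::conjugatable_field mat \<Rightarrow> 'a mat \<Rightarrow> bool" where
  "is_mp A B \<longleftrightarrow> B \<in> carrier_mat (dim_col A) (dim_row A) \<and>
      A * B * A = A \<and> B * A * B = B \<and>
      mat_adjoint (A * B) = A * B \<and> mat_adjoint (B * A) = B * A"

lemma mp_unique: fixes A :: "'a::conjugatable_field mat"
  assumes A: "A \<in> carrier_mat r c" and 1: "is_mp A B1" and 2: "is_mp A B2"
  shows "B1 = B2"
proof -
  have B1: "B1 \<in> carrier_mat c r" and a1: "A * B1 * A = A" and b1: "B1 * A * B1 = B1"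
    and c1: "mat_adjoint (A * B1) = A * B1" and d1: "mat_adjoint (B1 * A) = B1 * A"
    using 1 A unfolding is_mp_def by simp_all
  have B2: "B2 \<in> carrier_mat c r" and a2: "A * B2 * A = A" and b2: "B2 * A * B2 = B2"
    and c2: "mat_adjoint (A * B2) = A * B2" and d2: "mat_adjoint (B2 * A) = B2 * A"
    using 2 A unfolding is_mp_def by simp_all
  note dims = carrier_matD[OF A] carrier_matD[OF B1] carrier_matD[OF B2]
  have adjA2: "mat_adjoint A = mat_adjoint A * (mat_adjoint B2 * mat_adjoint A)"
    using arg_cong[OF a2, of mat_adjoint] dims by (simp add: adj_mult massoc)
  have adjA1: "mat_adjoint A = mat_adjoint A * (mat_adjoint B1 * mat_adjoint A)"
    using arg_cong[OF a1, of mat_adjoint] dims by (simp add: adj_mult massoc)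
  have "B1 = B1 * (A * B1)" using b1 dims by (simp add: massoc)
  also have "\<dots> = B1 * (mat_adjoint B1 * mat_adjoint A)" using c1 dims by (simp add: adj_mult)
  also have "\<dots> = B1 * (mat_adjoint B1 * (mat_adjoint A * (mat_adjoint B2 * mat_adjoint A)))"
    by (simp only: adjA2[symmetric])
  also have "\<dots> = B1 * ((mat_adjoint B1 * mat_adjoint A) * (mat_adjoint B2 * mat_adjoint A))"
    using dims by (simp add: massoc)
  also have "\<dots> = B1 * ((A * B1) * (A * B2))" using c1 c2 dims by (simp add: adj_mult)
  also have "\<dots> = (B1 * A * B1) * (A * B2)" using dims by (simp add: massoc)
  also have "\<dots> = B1 * A * B2" using b1 dims by (simp add: massoc)
  finally have e1: "B1 = B1 * A * B2" .
  have "B2 = (B2 * A) * B2" using b2 by simp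
  also have "\<dots> = (mat_adjoint A * mat_adjoint B2) * B2" using d2 dims by (simp add: adj_mult)
  also have "\<dots> = ((mat_adjoint A * (mat_adjoint B1 * mat_adjoint A)) * mat_adjoint B2) * B2"
    by (simp only: adjA1[symmetric])
  also have "\<dots> = ((mat_adjoint A * mat_adjoint B1) * (mat_adjoint A * mat_adjoint B2)) * B2"
    using dims by (simp add: massoc)
  also have "\<dots> = ((B1 * A) * (B2 * A)) * B2" using d1 d2 dims by (simp add: adj_mult)
  also have "\<dots> = B1 * A * (B2 * A * B2)" using dims by (simp add: massoc)
  also have "\<dots> = B1 * A * B2" using b2 by simp
  finally show ?thesis using e1 by simp
qed

lemma mp_inverse_eq: fixes A :: "'a::conjugatable_field mat"
  assumes A: "A \<in> carrier_mat r c" and B: "is_mp A B"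
  shows "mp_inverse A = B"
proof -
  have "mp_inverse A = (THE B. is_mp A B)" unfolding mp_inverse_def is_mp_def by simp
  also have "\<dots> = B" using B mp_unique[OF A] by blast
  finally show ?thesis .
qed


lemma inv_mat_props: fixes k :: "'a::field mat"
  assumes k: "k \<in> carrier_mat n n" and inv: "invertible_mat k"
  shows "inv_mat k \<in> carrier_mat n n \<and> k * inv_mat k = 1\<^sub>m n \<and> inv_mat k * k = 1\<^sub>m n"
proof -
  from inv obtain B where kB: "k * B = 1\<^sub>m (dim_row k)" and Bk: "B * k = 1\<^sub>m (dim_row B)"
    unfolding invertible_mat_def inverts_mat_def by blast
  have dk: "dim_row k = n" "dim_col k = n" using k by simp_all
  have dB1: "dim_col B = n" using arg_cong[OF kB, of dim_col] dk by simp
  have dB2: "dim_row B = n" using arg_cong[OF Bk, of dim_col] dk by simp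
  have B: "B \<in> carrier_mat n n" using dB1 dB2 by (intro carrier_matI)
  have kB': "k * B = 1\<^sub>m n" and Bk': "B * k = 1\<^sub>m n" using kB Bk dk dB2 by simp_all
  have uniq: "B' = B" if B': "B' \<in> carrier_mat n n" "k * B' = 1\<^sub>m n" "B' * k = 1\<^sub>m n" for B'
  proof -
    have "B' = B' * (k * B)" using kB' B' by simp
    also have "\<dots> = (B' * k) * B" using B'(1) k B by (simp add: massoc)
    also have "\<dots> = B" using B'(3) B by simp
    finally show ?thesis .
  qed
  have "inv_mat k = B" unfolding inv_mat_def dk(1)
    by (rule the_equality, use B kB' Bk' uniq in blast, use uniq in blast)
  thus ?thesis using B kB' Bk' by simp
qed

lemma one_inv_exists: fixes A :: "'a::field mat"
  assumes A: "A \<in> carrier_mat nr nc"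
  shows "\<exists>Y. Y \<in> carrier_mat nc nr \<and> A * Y * A = A"
proof -
  define C where "C = gauss_jordan_single A"
  note gj = gauss_jordan_single[OF A C_def[symmetric]]
  have C: "C \<in> carrier_mat nr nc" using gj(2) .
  obtain P Q where CPA: "C = P * A" and P: "P \<in> carrier_mat nr nr" and Q: "Q \<in> carrier_mat nr nr"
    and PQ: "P * Q = 1\<^sub>m nr" and QP: "Q * P = 1\<^sub>m nr" using gj(4) by blast
  obtain f where piv: "pivot_fun C f nc" using gj(3) C unfolding row_echelon_form_def by auto
  have dC: "dim_row C = nr" "dim_col C = nc" using C by simp_all
  note pD = pivot_funD[OF dC(1) piv]
  define Z where "Z = mat nc nr (\<lambda>(j,i). if f i < nc \<and> j = f i then (1::'a) else 0)"
  have Z: "Z \<in> carrier_mat nc nr" unfolding Z_def by simp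
  define D where "D = mat nr nr (\<lambda>(i',i). if f i < nc \<and> i' = i then (1::'a) else 0)"
  have CZ: "C * Z = D"
  proof (rule eq_matI)
    fix i' i assume i': "i' < dim_row D" and i: "i < dim_col D"
    have i'': "i' < nr" "i < nr" using i' i unfolding D_def by simp_all
    have "(C * Z) $$ (i', i) = (\<Sum>j\<in>{0..<nc}. C $$ (i',j) * (if f i < nc \<and> j = f i then 1 else 0))"
      using i'' C Z unfolding Z_def by (simp add: scalar_prod_def)
    also have "\<dots> = (if f i < nc then C $$ (i', f i) else 0)"
    proof (cases "f i < nc")
      case True
      have "(\<Sum>j\<in>{0..<nc}. C $$ (i',j) * (if f i < nc \<and> j = f i then 1 else 0))
         = (\<Sum>j\<in>{0..<nc}. if j = f i then C $$ (i',j) else 0)"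
        using True by (intro sum.cong) simp_all
      also have "\<dots> = C $$ (i', f i)" using True by (simp add: sum.delta')
      finally show ?thesis using True by simp
    qed simp
    also have "\<dots> = D $$ (i', i)"
      using i'' pD(4)[of i] pD(5)[of i i'] unfolding D_def by auto
    finally show "(C * Z) $$ (i', i) = D $$ (i', i)" .
  qed (use C Z in \<open>simp_all add: D_def\<close>)
  have DC: "D * C = C"
  proof (rule eq_matI)
    fix i' k assume i': "i' < dim_row C" and k: "k < dim_col C"
    have i'': "i' < nr" "k < nc" using i' k dC by simp_all
    have "(D * C) $$ (i', k) = (\<Sum>i\<in>{0..<nr}. (if f i < nc \<and> i' = i then 1 else 0) * C $$ (i, k))"
      using i'' C unfolding D_def by (simp add: scalar_prod_def)
    also have "\<dots> = (\<Sum>i\<in>{0..<nr}. if i = i' then (if f i' < nc then C $$ (i', k) else 0) else 0)"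
      by (intro sum.cong) auto
    also have "\<dots> = (if f i' < nc then C $$ (i', k) else 0)" using i'' by (simp add: sum.delta')
    also have "\<dots> = C $$ (i', k)"
    proof (cases "f i' < nc")
      case False
      hence "f i' = nc" using pD(1)[OF i''(1)] by simp
      thus ?thesis using pD(2)[OF i''(1), of k] i'' False by simp
    qed simp
    finally show "(D * C) $$ (i', k) = C $$ (i', k)" .
  qed (use C in \<open>simp_all add: D_def\<close>)
  have QC: "Q * C = A" unfolding CPA using Q P A QP by (simp flip: massoc)
  have "A * (Z * P) * A = Q * C * (Z * P) * A" using QC by simp
  also have "\<dots> = Q * ((C * Z) * (P * A))" using Q C Z P A by (simp add: massoc)
  also have "\<dots> = Q * C" unfolding CZ CPA[symmetric] DC ..
  also have "\<dots> = A" by (rule QC)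
  finally have "A * (Z * P) * A = A" .
  moreover have "Z * P \<in> carrier_mat nc nr" using Z P by simp
  ultimately show ?thesis by blast
qed


lemma mp13: fixes A :: "'a::conjugatable_ordered_field mat"
  assumes A: "A \<in> carrier_mat r c"
  shows "\<exists>G. G \<in> carrier_mat c r \<and> A * G * A = A \<and> mat_adjoint (A * G) = A * G"
proof -
  define M where "M = mat_adjoint A * A"
  have M: "M \<in> carrier_mat c c" unfolding M_def by (rule mult_carrier_mat[OF adj_carrier[OF A] A])
  have adjM: "mat_adjoint M = M" unfolding M_def using A by (simp add: adj_mult)
  obtain Y where Y: "Y \<in> carrier_mat c c" and MYM: "M * Y * M = M" using one_inv_exists[OF M] by blast
  have key: "A * (Z * M) = A" if Z: "Z \<in> carrier_mat c c" and MZM: "M * Z * M = M" for Z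
  proof -
    have "mat_adjoint A * (A * (Z * M)) = M * Z * M" unfolding M_def using A Z by (simp add: massoc)
    also have "\<dots> = mat_adjoint A * (A * 1\<^sub>m c)" using MZM A unfolding M_def by simp
    finally have e: "mat_adjoint A * (A * (Z * M)) = mat_adjoint A * (A * 1\<^sub>m c)" .
    have ZM: "Z * M \<in> carrier_mat c c" by (rule mult_carrier_mat[OF Z M])
    have "A * (Z * M) = A * 1\<^sub>m c" by (rule cancel_adj[OF A ZM one_carrier_mat e])
    thus ?thesis using A by simp
  qed
  have Y': "mat_adjoint Y \<in> carrier_mat c c" using Y by simp
  have "mat_adjoint (M * Y * M) = M * mat_adjoint Y * M" using M Y adjM by (simp add: adj_mult)
  hence MY'M: "M * mat_adjoint Y * M = M" using MYM adjM by simp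
  have k1: "A * (Y * M) = A" by (rule key[OF Y MYM])
  have k2: "A * (mat_adjoint Y * M) = A" by (rule key[OF Y' MY'M])
  have adjA: "mat_adjoint A = M * (Y * mat_adjoint A)"
  proof -
    have "mat_adjoint A = mat_adjoint (A * (mat_adjoint Y * M))" using k2 by simp
    also have "\<dots> = M * (Y * mat_adjoint A)" using A Y M adjM by (simp add: adj_mult massoc)
    finally show ?thesis .
  qed
  define G where "G = Y * mat_adjoint A"
  have G: "G \<in> carrier_mat c r" unfolding G_def using Y A by simp
  have 1: "A * G * A = A" unfolding G_def using k1 A Y by (simp add: massoc M_def)
  have "A * G = A * (Y * (M * (mat_adjoint Y * mat_adjoint A)))"
  proof -
    have adjA': "mat_adjoint A = M * (mat_adjoint Y * mat_adjoint A)"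
    proof -
      have "mat_adjoint A = mat_adjoint (A * (Y * M))" using k1 by simp
      also have "\<dots> = M * (mat_adjoint Y * mat_adjoint A)" using A Y M adjM by (simp add: adj_mult massoc)
      finally show ?thesis .
    qed
    show ?thesis unfolding G_def by (subst adjA', rule refl)
  qed
  also have "\<dots> = (A * (Y * M)) * (mat_adjoint Y * mat_adjoint A)" using A Y M by (simp add: massoc)
  also have "\<dots> = A * (mat_adjoint Y * mat_adjoint A)" unfolding k1 ..
  also have "\<dots> = mat_adjoint (A * G)" unfolding G_def using A Y by (simp add: adj_mult massoc)
  finally have 2: "mat_adjoint (A * G) = A * G" by simp
  show ?thesis using G 1 2 by blast
qed

lemma mp14: fixes A :: "'a::conjugatable_ordered_field mat"
  assumes A: "A \<in> carrier_mat r c"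
  shows "\<exists>H. H \<in> carrier_mat c r \<and> A * H * A = A \<and> mat_adjoint (H * A) = H * A"
proof -
  obtain G where G: "G \<in> carrier_mat r c" and 1: "mat_adjoint A * G * mat_adjoint A = mat_adjoint A"
    and 2: "mat_adjoint (mat_adjoint A * G) = mat_adjoint A * G"
    using mp13[OF adj_carrier[OF A]] by blast
  define H where "H = mat_adjoint G"
  have H: "H \<in> carrier_mat c r" unfolding H_def using G by simp
  have "A * H * A = mat_adjoint (mat_adjoint A * G * mat_adjoint A)"
    unfolding H_def using A G by (simp add: adj_mult massoc)
  hence 3: "A * H * A = A" unfolding 1 by simp
  have HA: "H * A = mat_adjoint A * G" unfolding H_def using 2 A G by (simp add: adj_mult)
  have "mat_adjoint (H * A) = H * A" unfolding HA using 2 .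
  thus ?thesis using H 3 by blast
qed

lemma mp_exists: fixes A :: "'a::conjugatable_ordered_field mat"
  assumes A: "A \<in> carrier_mat r c"
  shows "\<exists>B. is_mp A B"
proof -
  obtain G where G: "G \<in> carrier_mat c r" and g1: "A * G * A = A" and g2: "mat_adjoint (A * G) = A * G"
    using mp13[OF A] by blast
  obtain H where H: "H \<in> carrier_mat c r" and h1: "A * H * A = A" and h2: "mat_adjoint (H * A) = H * A"
    using mp14[OF A] by blast
  define D where "D = H * (A * G)"
  have D: "D \<in> carrier_mat c r" unfolding D_def using H A G by simp
  have AD: "A * D = A * G"
  proof -
    have "A * D = (A * H * A) * G" unfolding D_def using A H G by (simp add: massoc)
    thus ?thesis unfolding h1 .
  qed
  have DA: "D * A = H * A"
  proof -
    have "D * A = H * (A * G * A)" unfolding D_def using A H G by (simp add: massoc)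
    thus ?thesis unfolding g1 .
  qed
  have "A * D * A = A" unfolding AD by (rule g1)
  moreover have "D * A * D = D"
  proof -
    have "D * A * D = H * ((A * H * A) * G)" unfolding DA unfolding D_def using A H G by (simp add: massoc)
    thus ?thesis unfolding h1 D_def .
  qed
  moreover have "mat_adjoint (A * D) = A * D" unfolding AD by (rule g2)
  moreover have "mat_adjoint (D * A) = D * A" unfolding DA by (rule h2)
  ultimately have "is_mp A D" unfolding is_mp_def using D A by simp
  thus ?thesis by blast
qed

lemma mp_inverse_is: fixes A :: "'a::conjugatable_ordered_field mat"
  assumes A: "A \<in> carrier_mat r c"
  shows "is_mp A (mp_inverse A)"
proof -
  obtain B where B: "is_mp A B" using mp_exists[OF A] by blast
  show ?thesis using B unfolding mp_inverse_eq[OF A B] .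
qed


lemma mp_transfer: fixes P B Q C :: "'a::conjugatable_field mat"
  assumes P: "P \<in> carrier_mat p r" and B: "B \<in> carrier_mat r c" and Q: "Q \<in> carrier_mat c q"
  and PP: "mat_adjoint P * P = 1\<^sub>m r" and QQ: "Q * mat_adjoint Q = 1\<^sub>m c" and C: "is_mp B C"
  shows "is_mp (P * B * Q) (mat_adjoint Q * C * mat_adjoint P)"
proof -
  have Cc: "C \<in> carrier_mat c r" and c1: "B * C * B = B" and c2: "C * B * C = C"
    and c3: "mat_adjoint (B * C) = B * C" and c4: "mat_adjoint (C * B) = C * B"
    using C B unfolding is_mp_def by simp_all
  note dims = carrier_matD[OF P] carrier_matD[OF B] carrier_matD[OF Q] carrier_matD[OF Cc]
  have PP': "mat_adjoint P * (P * Z) = Z" if "dim_row Z = r" for Z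
    using PP dims that by (simp flip: massoc)
  have QQ': "Q * (mat_adjoint Q * Z) = Z" if "dim_row Z = c" for Z
    using QQ dims that by (simp flip: massoc)
  have BCB: "B * (C * (B * Z)) = B * Z" if "dim_row Z = c" for Z
    using c1 dims that by (simp flip: massoc)
  have CBC: "C * (B * (C * Z)) = C * Z" if "dim_row Z = r" for Z
    using c2 dims that by (simp flip: massoc)
  have bc: "mat_adjoint C * mat_adjoint B = B * C" using c3 dims by (simp add: adj_mult)
  have cb: "mat_adjoint B * mat_adjoint C = C * B" using c4 dims by (simp add: adj_mult)
  have bc': "mat_adjoint C * (mat_adjoint B * Z) = B * (C * Z)" if "dim_row Z = r" for Z
    using bc dims that by (simp flip: massoc)
  have cb': "mat_adjoint B * (mat_adjoint C * Z) = C * (B * Z)" if "dim_row Z = c" for Z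
    using cb dims that by (simp flip: massoc)
  have Dc: "mat_adjoint Q * C * mat_adjoint P \<in> carrier_mat (dim_col (P * B * Q)) (dim_row (P * B * Q))"
    using dims by (intro carrier_matI) simp_all
  show ?thesis unfolding is_mp_def
  proof (intro conjI)
    show "P * B * Q * (mat_adjoint Q * C * mat_adjoint P) * (P * B * Q) = P * B * Q"
      using dims by (simp add: massoc PP' QQ' BCB)
    show "mat_adjoint Q * C * mat_adjoint P * (P * B * Q) * (mat_adjoint Q * C * mat_adjoint P) =
      mat_adjoint Q * C * mat_adjoint P"
      using dims by (simp add: massoc PP' QQ' CBC)
    show "mat_adjoint (P * B * Q * (mat_adjoint Q * C * mat_adjoint P)) =
      P * B * Q * (mat_adjoint Q * C * mat_adjoint P)"
      using dims by (simp add: adj_mult massoc PP' QQ' bc')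
    show "mat_adjoint (mat_adjoint Q * C * mat_adjoint P * (P * B * Q)) =
      mat_adjoint Q * C * mat_adjoint P * (P * B * Q)"
      using dims by (simp add: adj_mult massoc PP' QQ' cb')
  qed (rule Dc)
qed

lemma J_carrier: "(J_mat p :: 'a::ring_1 mat) \<in> carrier_mat p (p + 1)"
  unfolding J_mat_def by simp

theorem theorem7:
  fixes X km kn :: "'a :: conjugatable_ordered_field mat"
  assumes "m \<ge> 1" and "n \<ge> 1"
    and "X \<in> carrier_mat m n"
    and "km \<in> carrier_mat m m" and "kn \<in> carrier_mat n n"
    and "invertible_mat km" and "invertible_mat kn"
    and "K_mat m = km * mat_adjoint km"
    and "K_mat n = kn * mat_adjoint kn"
  shows "mp_inverse (mat_adjoint (J_mat m) * X * J_mat n) =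
    mat_adjoint (J_mat n) * mat_adjoint (inv_mat kn)
      * mp_inverse (mat_adjoint km * X * kn) * inv_mat km * J_mat m"
proof -
  note X = assms(3) and km = assms(4) and kn = assms(5)
  define Jm where "Jm = (J_mat m :: 'a mat)"
  define Jn where "Jn = (J_mat n :: 'a mat)"
  define ikm where "ikm = inv_mat km"
  define ikn where "ikn = inv_mat kn"
  have Jm: "Jm \<in> carrier_mat m (m+1)" unfolding Jm_def by (rule J_carrier)
  have Jn: "Jn \<in> carrier_mat n (n+1)" unfolding Jn_def by (rule J_carrier)
  have ikm: "ikm \<in> carrier_mat m m" and km1: "km * ikm = 1\<^sub>m m" and km2: "ikm * km = 1\<^sub>m m"
    using inv_mat_props[OF km assms(6)] unfolding ikm_def by simp_all
  have ikn: "ikn \<in> carrier_mat n n" and kn1: "kn * ikn = 1\<^sub>m n" and kn2: "ikn * kn = 1\<^sub>m n"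
    using inv_mat_props[OF kn assms(7)] unfolding ikn_def by simp_all
  note dims = carrier_matD[OF X] carrier_matD[OF km] carrier_matD[OF kn] carrier_matD[OF Jm]
    carrier_matD[OF Jn] carrier_matD[OF ikm] carrier_matD[OF ikn]
  have KJm: "Jm * (mat_adjoint Jm * Z) = km * (mat_adjoint km * Z)" if "dim_row Z = m" for Z
  proof -
    have "Jm * mat_adjoint Jm = km * mat_adjoint km" using assms(8) unfolding K_mat_def Jm_def by simp
    hence "Jm * mat_adjoint Jm * Z = km * mat_adjoint km * Z" by simp
    thus ?thesis using dims that by (simp add: massoc)
  qed
  have KJn: "Jn * (mat_adjoint Jn * Z) = kn * (mat_adjoint kn * Z)" if "dim_row Z = n" for Z
  proof -
    have "Jn * mat_adjoint Jn = kn * mat_adjoint kn" using assms(9) unfolding K_mat_def Jn_def by simp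
    hence "Jn * mat_adjoint Jn * Z = kn * mat_adjoint kn * Z" by simp
    thus ?thesis using dims that by (simp add: massoc)
  qed
  have km2': "ikm * (km * Z) = Z" if "dim_row Z = m" for Z using km2 dims that by (simp flip: massoc)
  have kn2': "ikn * (kn * Z) = Z" if "dim_row Z = n" for Z using kn2 dims that by (simp flip: massoc)
  have kn1': "kn * (ikn * Z) = Z" if "dim_row Z = n" for Z using kn1 dims that by (simp flip: massoc)
  have akm1: "mat_adjoint km * mat_adjoint ikm = 1\<^sub>m m"
  proof -
    have "mat_adjoint km * mat_adjoint ikm = mat_adjoint (ikm * km)" using dims by (simp add: adj_mult)
    also have "\<dots> = 1\<^sub>m m" unfolding km2 by simp
    finally show ?thesis .
  qed
  have akn1: "mat_adjoint kn * mat_adjoint ikn = 1\<^sub>m n"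
  proof -
    have "mat_adjoint kn * mat_adjoint ikn = mat_adjoint (ikn * kn)" using dims by (simp add: adj_mult)
    also have "\<dots> = 1\<^sub>m n" unfolding kn2 by simp
    finally show ?thesis .
  qed
  have akm2: "mat_adjoint ikm * mat_adjoint km = 1\<^sub>m m"
  proof -
    have "mat_adjoint ikm * mat_adjoint km = mat_adjoint (km * ikm)" using dims by (simp add: adj_mult)
    also have "\<dots> = 1\<^sub>m m" unfolding km1 by simp
    finally show ?thesis .
  qed
  have akm2': "mat_adjoint ikm * (mat_adjoint km * Z) = Z" if "dim_row Z = m" for Z
    using akm2 dims that by (simp flip: massoc)
  define P where "P = mat_adjoint Jm * mat_adjoint ikm"
  define Q where "Q = ikn * Jn"
  define B where "B = mat_adjoint km * X * kn"
  have P: "P \<in> carrier_mat (m+1) m" unfolding P_def using dims by (intro carrier_matI) simp_all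
  have Q: "Q \<in> carrier_mat n (n+1)" unfolding Q_def using dims by (intro carrier_matI) simp_all
  have B: "B \<in> carrier_mat m n" unfolding B_def using dims by (intro carrier_matI) simp_all
  have PP: "mat_adjoint P * P = 1\<^sub>m m" unfolding P_def using dims
    by (simp add: adj_mult massoc KJm km2' akm1 km2)
  have QQ: "Q * mat_adjoint Q = 1\<^sub>m n" unfolding Q_def using dims
    by (simp add: adj_mult massoc KJn kn2' akn1 kn2)
  have Aeq: "mat_adjoint Jm * X * Jn = P * B * Q" unfolding P_def B_def Q_def using dims
    by (simp add: massoc akm2' kn1')
  have Ceq: "mat_adjoint Jn * mat_adjoint ikn * mp_inverse B * ikm * Jm
      = mat_adjoint Q * mp_inverse B * mat_adjoint P"
  proof -
    have "mp_inverse B \<in> carrier_mat n m" using mp_inverse_is[OF B] B unfolding is_mp_def by simp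
    thus ?thesis unfolding P_def Q_def using dims by (simp add: adj_mult massoc)
  qed
  have PBQ: "P * B * Q \<in> carrier_mat (m+1) (n+1)" using P B Q by simp
  have "mp_inverse (P * B * Q) = mat_adjoint Q * mp_inverse B * mat_adjoint P"
    by (rule mp_inverse_eq[OF PBQ mp_transfer[OF P B Q PP QQ mp_inverse_is[OF B]]])
  thus ?thesis unfolding Jm_def[symmetric] Jn_def[symmetric] ikm_def[symmetric] ikn_def[symmetric]
    B_def[symmetric] Aeq Ceq .
qed

end
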